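(* There exists an invertible $24\times24$ binary matrix $A$ such that the linear kernel $g({\bf u})={\bf u}A$ has partial distance sequence $(1,2,2,2,2,2,4,4,4,4,4,4,8,8,8,8,8,8,8,12,12,12,16,16)$. Consequently $E_{24}\ge\frac1{24}\sum_{i=0}^{23}\log_{24}D_{min}^{(i)}\approx0.51577$.
   Context: A kernel of dimension $\ell$ is a bijection $g:\{0,1\}^\ell\to\{0,1\}^\ell$; a linear kernel is $g({\bf u})={\bf u}G$ over $\mathbb{F}_2$ for an invertible $\ell\times\ell$ binary matrix $G$. ${\bf a}\bullet{\bf b}$ denotes concatenation, $d_H$ Hamming distance. Partial distances: $D_{min}^{(i)}=\min\{d_H(g({\bf w}\bullet 0\bullet{\bf u}),g({\bf w}\bullet 1\bullet {\bf v})) : {\bf w}\in\{0,1\}^i,\ {\bf u},{\bf v}\in\{0,1\}^{\ell-i-1}\}$, $i=0,\dots,\ell-1$; exponent $E(g)=\frac1\ell\sum_{i}\log_\ell D_{min}^{(i)}$; $E_\ell=\max_g E(g)$ over all kernels of dimension $\ell$. *)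

theory Defs
  imports Complex_Main "HOL-Library.Z2" "Jordan_Normal_Form.Matrix"
begin

definition words :: "nat \<Rightarrow> bit list set" where
  "words l = {x. length x = l}"

definition hamming :: "bit list \<Rightarrow> bit list \<Rightarrow> nat" where
  "hamming x y = card {i. i < length x \<and> x ! i \<noteq> y ! i}"

definition is_kernel :: "nat \<Rightarrow> (bit list \<Rightarrow> bit list) \<Rightarrow> bool" where
  "is_kernel l g \<longleftrightarrow> bij_betw g (words l) (words l)"

definition lin_kernel :: "bit mat \<Rightarrow> bit list \<Rightarrow> bit list" where
  "lin_kernel G u = map (\<lambda>j. \<Sum>i<length u. u ! i * G $$ (i, j)) [0..<dim_col G]"

definition partial_distance :: "nat \<Rightarrow> (bit list \<Rightarrow> bit list) \<Rightarrow> nat \<Rightarrow> nat" where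
  "partial_distance l g i = Min {hamming (g (w @ [0] @ u)) (g (w @ [1] @ v)) | w u v.
      length w = i \<and> length u = l - i - 1 \<and> length v = l - i - 1}"

definition kernel_exponent :: "nat \<Rightarrow> (bit list \<Rightarrow> bit list) \<Rightarrow> real" where
  "kernel_exponent l g = (1 / real l) * (\<Sum>i<l. log (real l) (real (partial_distance l g i)))"

definition max_exponent :: "nat \<Rightarrow> real" where
  "max_exponent l = Max (kernel_exponent l ` {g. is_kernel l g})"

end

theory Submission
  imports Defs
begin

declare add_bit_eq_xor[simp del] mult_bit_eq_and[simp del]

fun vadd :: "bit list \<Rightarrow> bit list \<Rightarrow> bit list" where
  "vadd (a#as) (b#bs) = (a+b) # vadd as bs"
| "vadd _ _ = []"

fun comb :: "nat \<Rightarrow> bit list list \<Rightarrow> bit list \<Rightarrow> bit list" where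
  "comb n (r#R) (c#cs) = (if c = 0 then comb n R cs else vadd r (comb n R cs))"
| "comb n _ _ = replicate n 0"

fun dot :: "bit list \<Rightarrow> bit list \<Rightarrow> bit" where
  "dot (a#as) (b#bs) = a*b + dot as bs"
| "dot _ _ = 0"

fun chk :: "(bit list \<Rightarrow> bool) \<Rightarrow> bit list list \<Rightarrow> bit list \<Rightarrow> bool \<Rightarrow> bool" where
  "chk P [] acc f = (f \<longrightarrow> P acc)"
| "chk P (r#R) acc f = (chk P R acc f \<and> chk P R (vadd r acc) True)"

fun idrows :: "nat \<Rightarrow> bit list list" where
  "idrows 0 = []"
| "idrows (Suc n) = (1 # replicate n 0) # map (Cons 0) (idrows n)"

definition wt :: "bit list \<Rightarrow> nat" where
  "wt v = card {j. j < length v \<and> v ! j \<noteq> 0}"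

definition Dl :: "nat list" where
  "Dl = [1,2,2,2,2,2,4,4,4,4,4,4,8,8,8,8,8,8,8,12,12,12,16,16]"

definition Lr :: "bit list list" where
  "Lr = [[1,0,0,0,0,0,0,0,0,0,0,0,0,0,0,0,0,0,0,0,0,0,0,0],
   [0,0,0,0,0,0,0,0,0,0,0,0,0,0,1,0,0,0,1,0,0,0,0,0],
   [0,1,0,0,0,0,0,0,0,0,0,0,0,0,0,0,0,1,0,0,0,0,0,0],
   [0,0,0,0,0,1,0,0,0,0,0,0,0,0,0,0,0,1,0,0,0,0,0,0],
   [0,0,0,0,0,0,1,0,0,0,0,0,0,1,0,0,0,0,0,0,0,0,0,0],
   [0,0,0,0,0,0,0,0,0,0,0,0,0,0,1,1,0,0,0,0,0,0,0,0],
   [0,0,0,0,1,0,0,0,0,0,0,0,0,1,0,0,0,1,0,0,0,0,1,0],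
   [1,0,0,0,0,0,0,0,1,0,0,0,0,0,0,1,0,0,0,0,0,0,0,1],
   [0,0,0,0,0,0,0,0,1,0,0,0,1,0,0,0,0,1,0,0,0,1,0,0],
   [0,0,0,0,1,1,0,0,0,0,0,0,1,0,0,0,0,1,0,0,0,0,0,0],
   [0,0,0,1,0,0,1,0,0,0,0,1,0,0,0,0,1,0,0,0,0,0,0,0],
   [1,0,0,0,1,1,0,0,0,0,0,0,0,0,1,0,0,0,0,0,0,0,0,0],
   [0,0,0,0,1,0,0,1,0,1,0,1,0,0,0,0,1,0,1,1,1,0,0,0],
   [0,0,0,0,0,1,0,0,1,0,0,1,0,1,1,0,0,0,0,1,0,1,1,0],
   [0,0,1,0,1,0,0,0,0,0,0,0,0,0,0,1,1,1,1,1,0,0,1,0],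
   [0,1,0,0,1,0,1,1,0,0,0,0,1,0,1,1,0,0,0,0,0,1,0,0],
   [1,1,0,0,0,0,1,0,0,0,0,0,0,1,1,0,0,1,0,0,0,1,1,0],
   [0,1,0,0,1,1,0,0,0,0,0,0,0,1,0,1,0,0,1,0,0,1,1,0],
   [1,0,0,0,1,0,1,0,0,0,0,0,0,1,0,1,0,0,0,0,1,1,0,1],
   [1,0,1,0,0,0,1,0,1,0,1,0,1,0,1,0,1,1,0,0,1,1,1,0],
   [0,1,1,1,0,0,0,0,0,1,1,0,0,1,1,1,1,0,0,1,1,1,0,0],
   [1,0,1,1,0,1,0,1,1,1,0,1,0,1,0,0,0,0,0,0,1,1,1,0],
   [0,0,0,0,1,0,1,1,1,1,1,1,1,1,0,1,1,0,1,1,1,1,1,0],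
   [1,1,1,1,0,1,0,1,0,1,0,0,1,0,1,1,1,1,1,0,0,1,1,1]]"

definition Mr :: "bit list list" where
  "Mr = [[1,0,0,0,0,0,0,0,0,0,0,0,0,0,0,0,0,0,0,0,0,0,0,0],
   [1,0,1,0,1,1,1,1,0,0,1,1,1,0,0,1,1,1,1,1,1,0,0,0],
   [1,0,1,1,0,0,1,1,0,1,1,0,1,1,1,1,1,1,0,1,1,1,0,1],
   [1,1,0,1,0,1,1,1,1,1,1,1,0,0,1,1,0,0,1,1,1,1,0,0],
   [1,0,1,1,1,0,0,0,0,1,1,0,1,0,1,0,1,1,1,0,0,0,0,1],
   [1,0,0,1,1,1,1,1,0,0,1,1,1,0,0,1,1,1,1,1,1,0,0,0],
   [1,1,0,0,1,0,1,1,0,0,1,0,1,0,0,1,0,0,1,1,1,0,0,0],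
   [1,0,0,0,1,0,0,1,0,1,1,0,1,0,0,0,0,1,1,1,1,0,0,0],
   [1,1,0,1,1,1,1,0,1,0,1,0,1,0,1,0,1,0,1,0,0,0,0,1],
   [1,0,0,0,0,1,1,1,1,0,0,0,0,0,0,0,0,1,1,0,1,1,1,0],
   [1,1,0,1,0,0,1,0,1,0,0,0,1,0,0,0,1,1,0,0,0,0,1,0],
   [1,1,1,1,0,0,0,1,0,1,1,1,0,1,0,0,1,1,0,1,0,0,1,1],
   [1,0,1,0,1,0,0,0,0,0,1,0,1,0,1,0,1,1,1,0,0,0,0,1],
   [1,1,0,0,0,0,1,1,0,0,1,0,1,0,0,1,0,0,1,1,1,0,0,0],
   [1,0,1,0,0,1,1,1,0,1,0,0,0,0,1,1,0,0,0,1,1,0,0,1],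
   [1,0,1,0,0,0,1,1,0,1,0,0,0,0,1,1,0,0,0,1,1,0,0,1],
   [1,1,1,0,1,1,0,1,1,0,0,0,1,1,1,0,1,1,0,1,0,1,1,1],
   [1,0,0,0,1,1,1,1,0,0,1,1,1,0,0,1,1,1,1,1,1,0,0,0],
   [1,1,1,0,0,1,1,1,0,1,0,0,0,0,1,1,0,0,0,1,1,0,0,1],
   [1,1,0,1,1,0,1,1,1,1,0,0,1,0,1,0,0,0,1,1,0,0,1,0],
   [1,0,0,1,0,1,1,0,1,1,1,1,1,0,0,1,1,1,0,1,1,0,0,0],
   [1,1,1,1,1,0,0,1,0,0,1,1,1,0,0,1,1,0,1,1,1,0,0,0],
   [1,1,1,1,0,1,1,0,0,1,1,1,1,0,1,0,0,0,1,0,0,0,0,1],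
   [1,1,1,1,1,1,0,0,1,1,1,0,1,0,0,1,1,0,1,1,1,0,0,0]]"

definition Hr :: "bit list list" where
  "Hr = [[0,1,1,0,1,0,0,0,0,0,0,1,1,0,1,1,1,0,1,0,0,1,1,1],
   [0,0,1,1,1,1,0,0,1,0,1,1,0,0,0,0,0,0,0,1,1,1,1,1],
   [0,0,1,0,0,1,1,1,1,0,0,1,0,0,1,1,0,1,1,1,0,0,1,0],
   [1,1,1,1,0,1,1,0,0,0,0,0,0,0,0,1,0,1,1,1,0,1,1,0],
   [1,0,0,1,0,1,1,1,1,0,0,0,1,1,0,1,0,0,0,0,1,0,1,1],
   [0,1,0,0,0,1,1,0,0,1,1,1,0,1,1,0,0,1,0,1,1,1,0,0]]"

lemma bit_cases2: "(x::bit) = 0 \<or> x = 1"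
  by (cases x) auto

lemma bit_add_self [simp]: "(x::bit) + x = 0"
  by (cases x) auto

lemma bit_neq_iff: "((a::bit) \<noteq> b) = (a + b \<noteq> 0)"
  by (cases a; cases b) auto

lemma length_vadd [simp]: "length (vadd a b) = min (length a) (length b)"
  by (induction a b rule: vadd.induct) auto

lemma nth_vadd: "j < length a \<Longrightarrow> j < length b \<Longrightarrow> vadd a b ! j = a!j + b!j"
  by (induction a b arbitrary: j rule: vadd.induct) (auto simp: nth_Cons split: nat.split)

lemma vadd_comm: "vadd a b = vadd b a"
  by (induction a arbitrary: b) (case_tac b; simp add: add.commute)+

lemma vadd_assoc: "vadd (vadd a b) c = vadd a (vadd b c)"
  by (induction a arbitrary: b c) (case_tac b; case_tac c; simp add: add.assoc)+

lemma vadd_zero_right: "length a \<le> n \<Longrightarrow> vadd a (replicate n 0) = a"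
  by (induction a arbitrary: n) (case_tac n; simp)+

lemma vadd_zero_left: "length a \<le> n \<Longrightarrow> vadd (replicate n 0) a = a"
  using vadd_zero_right vadd_comm by metis

lemma vadd_append_same: "length x = length y \<Longrightarrow>
   vadd (w @ x) (w @ y) = replicate (length w) 0 @ vadd x y"
  by (induction w) auto

lemma length_comb [simp]: "(\<forall>r\<in>set R. length r = n) \<Longrightarrow> length (comb n R c) = n"
  by (induction n R c rule: comb.induct) auto

lemma sum_lessThan_Suc_shift': "(\<Sum>i<Suc m. f i) = f 0 + (\<Sum>i<m. f (Suc i))"
  by (rule sum.lessThan_Suc_shift)

lemma nth_comb: "(\<forall>r\<in>set R. length r = n) \<Longrightarrow> length c = length R \<Longrightarrow> j < n \<Longrightarrow>
   comb n R c ! j = (\<Sum>i<length c. c!i * R!i!j)"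
proof (induction R arbitrary: c)
  case Nil
  then show ?case by simp
next
  case (Cons r R)
  then obtain x cs where c: "c = x # cs" by (cases c) auto
  have IH: "comb n R cs ! j = (\<Sum>i<length cs. cs!i * R!i!j)"
    using Cons c by auto
  have S: "(\<Sum>i<length c. c!i * (r#R)!i!j) = x * r!j + (\<Sum>i<length cs. cs!i * R!i!j)"
    unfolding c length_Cons sum_lessThan_Suc_shift' nth_Cons_0 nth_Cons_Suc by (rule refl)
  have "comb n (r#R) c ! j = x * r!j + comb n R cs ! j"
  proof (cases "x = 0")
    case True
    then show ?thesis using c by simp
  next
    case False
    then have "x = 1" by simp
    then show ?thesis using c Cons.prems by (simp add: nth_vadd)
  qed
  then show ?case using S IH by simp
qed

lemma comb_replicate_prefix: "comb n L (replicate i 0 @ x) = comb n (drop i L) x"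
proof (induction i arbitrary: L)
  case 0
  then show ?case by simp
next
  case (Suc i)
  then show ?case by (cases L) auto
qed

lemma comb_zero: "comb n R (replicate k 0) = replicate n 0"
  by (induction k arbitrary: R) (case_tac R; simp)+

lemma comb_vadd: "(\<forall>r\<in>set R. length r = n) \<Longrightarrow> length a = length R \<Longrightarrow> length b = length R \<Longrightarrow>
   comb n R (vadd a b) = vadd (comb n R a) (comb n R b)"
proof (rule nth_equalityI)
  assume A: "\<forall>r\<in>set R. length r = n" "length a = length R" "length b = length R"
  show "length (comb n R (vadd a b)) = length (vadd (comb n R a) (comb n R b))"
    using A by simp
  fix j assume "j < length (comb n R (vadd a b))"
  then have j: "j < n" using A by simp
  have "comb n R (vadd a b) ! j = (\<Sum>i<length R. vadd a b ! i * R!i!j)"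
    using A j by (simp add: nth_comb)
  also have "\<dots> = (\<Sum>i<length R. a!i * R!i!j + b!i * R!i!j)"
    using A by (intro sum.cong) (auto simp: nth_vadd distrib_right)
  also have "\<dots> = comb n R a ! j + comb n R b ! j"
    using A j by (simp add: nth_comb sum.distrib)
  also have "\<dots> = vadd (comb n R a) (comb n R b) ! j"
    using A j by (simp add: nth_vadd)
  finally show "comb n R (vadd a b) ! j = vadd (comb n R a) (comb n R b) ! j" .
qed

lemma comb_compose: "(\<forall>r\<in>set M. length r = n) \<Longrightarrow> length M = m \<Longrightarrow>
   (\<forall>r\<in>set L. length r = m) \<Longrightarrow> length u = length L \<Longrightarrow>
   comb n M (comb m L u) = comb n (map (comb n M) L) u"
proof (induction L arbitrary: u)
  case Nil
  then show ?case by (simp add: comb_zero[where k = m, simplified])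
next
  case (Cons r L)
  then obtain x cs where u: "u = x # cs" by (cases u) auto
  show ?case
  proof (cases "x = 0")
    case True
    then show ?thesis using Cons u by simp
  next
    case False
    then show ?thesis using Cons u by (simp add: comb_vadd)
  qed
qed

lemma comb_cons0: "comb (Suc n) (map (Cons 0) R) c = 0 # comb n R c"
  by (induction n R c rule: comb.induct) auto

lemma comb_idrows: "length c = n \<Longrightarrow> comb n (idrows n) c = c"
proof (induction n arbitrary: c)
  case 0
  then show ?case by simp
next
  case (Suc n)
  then obtain x cs where c: "c = x # cs" by (cases c) auto
  then show ?case using Suc
    by (cases "x = 0") (auto simp: comb_cons0 vadd_zero_left)
qed

lemma length_idrows [simp]: "length (idrows n) = n"
  by (induction n) auto

lemma nth_idrows: "i < n \<Longrightarrow> j < n \<Longrightarrow> idrows n ! i ! j = (if i = j then 1 else 0)"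
proof (induction n arbitrary: i j)
  case 0
  then show ?case by simp
next
  case (Suc n)
  then show ?case
    by (cases i; cases j) (auto simp: nth_Cons')
qed

lemma dot_vadd: "length a = length b \<Longrightarrow> dot h (vadd a b) = dot h a + dot h b"
proof (induction h arbitrary: a b)
  case Nil
  then show ?case by simp
next
  case (Cons x h)
  then show ?case
    by (cases a; cases b) (simp_all add: distrib_left add_ac)
qed

lemma dot_zero: "dot h (replicate n 0) = 0"
  by (induction h arbitrary: n) (case_tac n; simp)+

lemma dot_comb: "(\<forall>r\<in>set R. dot h r = 0) \<Longrightarrow> (\<forall>r\<in>set R. length r = n) \<Longrightarrow>
   dot h (comb n R c) = 0"
  by (induction n R c rule: comb.induct) (auto simp: dot_vadd dot_zero)

lemma dot_sum: "length h = length v \<Longrightarrow> dot h v = (\<Sum>j<length v. h!j * v!j)"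
proof (induction h arbitrary: v)
  case Nil
  then show ?case by simp
next
  case (Cons x h)
  then obtain y v' where v: "v = y # v'" by (cases v) auto
  have "(\<Sum>j<length v. (x#h)!j * v!j) = x * y + (\<Sum>j<length v'. h!j * v'!j)"
    unfolding v length_Cons sum_lessThan_Suc_shift' nth_Cons_0 nth_Cons_Suc by (rule refl)
  then show ?case using Cons v by simp
qed

lemma of_nat_bit: "(of_nat k :: bit) = (if even k then 0 else 1)"
proof (induction k)
  case 0
  then show ?case by simp
next
  case (Suc k)
  have "(of_nat (Suc k) :: bit) = 1 + of_nat k" by (simp only: of_nat_Suc)
  then show ?case using Suc by (cases "even k") simp_all
qed

lemma dot_ones: "dot (replicate (length v) 1) v = of_nat (length (filter (\<lambda>b. b = 1) v))"
proof (induction v)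
  case Nil
  then show ?case by simp
next
  case (Cons a v)
  show ?case
  proof (cases "a = 0")
    case True
    then show ?thesis using Cons by simp
  next
    case False
    then have a: "a = 1" by simp
    have "dot (replicate (length (a#v)) 1) (a#v) = 1 + dot (replicate (length v) 1) v"
      using a by simp
    also have "\<dots> = 1 + of_nat (length (filter (\<lambda>b. b = 1) v))" using Cons by simp
    also have "\<dots> = of_nat (Suc (length (filter (\<lambda>b. b = 1) v)))" by (simp only: of_nat_Suc)
    finally show ?thesis using a by simp
  qed
qed

lemma wt_filter: "wt v = length (filter (\<lambda>b. b = 1) v)"
  unfolding wt_def by (simp add: length_filter_conv_card)

lemma hamming_wt: "length x = length y \<Longrightarrow> hamming x y = wt (vadd x y)"
  unfolding hamming_def wt_def
  by (rule arg_cong[where f = card]) (auto simp: nth_vadd bit_neq_iff[simplified])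


section \<open>Concrete matrices\<close>

definition Am :: "bit mat" where "Am = mat 24 24 (\<lambda>(i,j). Lr!i!j)"
definition Bm :: "bit mat" where "Bm = mat 24 24 (\<lambda>(i,j). Mr!i!j)"

lemma len_Lr: "length Lr = 24" by code_simp
lemma rows_Lr: "\<forall>r\<in>set Lr. length r = 24" by code_simp
lemma len_Mr: "length Mr = 24" by code_simp
lemma rows_Mr: "\<forall>r\<in>set Mr. length r = 24" by code_simp
lemma inv_lm: "map (comb 24 Mr) Lr = idrows 24" by code_simp
lemma inv_ml: "map (comb 24 Lr) Mr = idrows 24" by code_simp
lemma wts: "map (\<lambda>r. length (filter (\<lambda>b. b = 1) r)) Lr = Dl" by code_simp
lemma par_rows: "\<forall>r\<in>set (drop 1 Lr). dot (replicate 24 1) r = 0" by code_simp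
lemma syn_rows: "\<forall>r\<in>set (drop 6 Lr). \<forall>h\<in>set Hr. dot h r = 0" by code_simp
lemma H_distinct: "distinct (List.transpose Hr)" by code_simp
lemma H_len: "length (List.transpose Hr) = 24" by code_simp
lemma H_rows: "\<forall>h\<in>set Hr. length h = 24" by code_simp
lemma g8: "chk (\<lambda>v. 8 \<le> length (filter (\<lambda>b. b = 1) v)) (drop 12 Lr) (replicate 24 0) False"
  by code_simp
lemma g12: "chk (\<lambda>v. 12 \<le> length (filter (\<lambda>b. b = 1) v)) (drop 19 Lr) (replicate 24 0) False"
  by code_simp
lemma g16: "chk (\<lambda>v. 16 \<le> length (filter (\<lambda>b. b = 1) v)) (drop 22 Lr) (replicate 24 0) False"
  by code_simp
lemma Dl_vals: "list_all (\<lambda>i. Dl!i = (if i = 0 then 1 else if i < 6 then 2 else if i < 12 then 4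
   else if i < 19 then 8 else if i < 22 then 12 else 16)) [0..<24]" by code_simp

lemma Dl_val: assumes "i < 24" shows "Dl!i = (if i = 0 then 1 else if i < 6 then 2 else if i < 12 then 4
   else if i < 19 then 8 else if i < 22 then 12 else 16)"
proof -
  have "i \<in> {0..<24}" using assms by (simp only: atLeastLessThan_iff) simp
  moreover have "\<forall>x\<in>{0..<24}. Dl!x = (if x = 0 then 1 else if x < 6 then 2 else if x < 12 then 4
   else if x < 19 then 8 else if x < 22 then 12 else 16)"
    using Dl_vals by (simp only: list_all_iff set_upt)
  ultimately show ?thesis by (rule bspec[rotated])
qed

lemma rows_drop: "\<forall>r\<in>set (drop i Lr). length r = 24"
  using rows_Lr by (auto dest: in_set_dropD)

lemma lk: "length u = 24 \<Longrightarrow> lin_kernel Am u = comb 24 Lr u"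
proof (rule nth_equalityI)
  assume u: "length u = 24"
  show "length (lin_kernel Am u) = length (comb 24 Lr u)"
    using rows_Lr by (simp add: lin_kernel_def Am_def)
  fix j assume "j < length (lin_kernel Am u)"
  then have j: "j < 24" by (simp add: lin_kernel_def Am_def)
  have "lin_kernel Am u ! j = (\<Sum>i<length u. u ! i * Am $$ (i, j))"
    using j by (simp add: lin_kernel_def Am_def)
  also have "\<dots> = (\<Sum>i<length u. u ! i * Lr ! i ! j)"
    using u j by (intro sum.cong) (auto simp: Am_def)
  also have "\<dots> = comb 24 Lr u ! j"
    using u j rows_Lr len_Lr by (simp add: nth_comb)
  finally show "lin_kernel Am u ! j = comb 24 Lr u ! j" .
qed

lemma chk_sound: "chk P R acc f \<Longrightarrow> \<forall>r\<in>set R. length r = n \<Longrightarrow> length acc = n \<Longrightarrow>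
   length c = length R \<Longrightarrow> f \<or> 1 \<in> set c \<Longrightarrow> P (vadd acc (comb n R c))"
proof (induction R arbitrary: acc f c)
  case Nil
  then show ?case by (simp add: vadd_zero_right)
next
  case (Cons r R)
  then obtain x cs where c: "c = x # cs" by (cases c) auto
  show ?case
  proof (cases "x = 0")
    case True
    then have "P (vadd acc (comb n R cs))"
      using Cons.IH[of acc f cs] Cons.prems c by auto
    then show ?thesis using True c by simp
  next
    case False
    then have x: "x = 1" by simp
    have "P (vadd (vadd r acc) (comb n R cs))"
      using Cons.IH[of "vadd r acc" True cs] Cons.prems c by auto
    moreover have "vadd (vadd r acc) (comb n R cs) = vadd acc (vadd r (comb n R cs))"
      by (metis vadd_assoc vadd_comm)
    ultimately show ?thesis using x c by simp
  qed
qed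

lemma comb_inv: "length u = 24 \<Longrightarrow> comb 24 Mr (comb 24 Lr u) = u"
proof -
  assume u: "length u = 24"
  have "comb 24 Mr (comb 24 Lr u) = comb 24 (map (comb 24 Mr) Lr) u"
    using rows_Mr len_Mr rows_Lr u len_Lr by (intro comb_compose) auto
  also have "\<dots> = u" using u by (simp add: inv_lm comb_idrows)
  finally show ?thesis .
qed

lemma comb_inv2: "length u = 24 \<Longrightarrow> comb 24 Lr (comb 24 Mr u) = u"
proof -
  assume u: "length u = 24"
  have "comb 24 Lr (comb 24 Mr u) = comb 24 (map (comb 24 Lr) Mr) u"
    using rows_Mr len_Mr rows_Lr u len_Lr by (intro comb_compose) auto
  also have "\<dots> = u" using u by (simp add: inv_ml comb_idrows)
  finally show ?thesis .
qed

lemma comb_nonzero: "length u = 24 \<Longrightarrow> u \<noteq> replicate 24 0 \<Longrightarrow> comb 24 Lr u \<noteq> replicate 24 0"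
  using comb_inv comb_zero by metis

lemma wt_zero: "wt v = 0 \<Longrightarrow> v = replicate (length v) 0"
proof -
  assume "wt v = 0"
  then have "{j. j < length v \<and> v ! j \<noteq> 0} = {}" unfolding wt_def by simp
  then show ?thesis by (intro nth_equalityI) auto
qed

lemma W2:
  assumes v: "length v = 24" and h0: "\<forall>h\<in>set Hr. dot h v = 0" and w: "wt v = 2"
  shows False
proof -
  from w obtain a b where ab: "{j. j < length v \<and> v ! j \<noteq> 0} = {a, b}" "a \<noteq> b"
    unfolding wt_def by (auto simp: card_2_iff)
  have "a \<in> {j. j < length v \<and> v ! j \<noteq> 0}" "b \<in> {j. j < length v \<and> v ! j \<noteq> 0}"
    using ab(1) by simp_all
  then have a: "a < 24" "v ! a = 1" and b: "b < 24" "v ! b = 1"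
    using v by simp_all
  have other: "v ! j = 0" if j: "j < 24" "j \<noteq> a" "j \<noteq> b" for j
  proof -
    have "j \<notin> {j. j < length v \<and> v ! j \<noteq> 0}" using ab(1) j by simp
    then show ?thesis using j v by simp
  qed
  have eq: "h ! a = h ! b" if h: "h \<in> set Hr" for h
  proof -
    have lh: "length h = 24" using H_rows h by auto
    have "dot h v = (\<Sum>j<24. h!j * v!j)" using lh v by (simp add: dot_sum)
    also have "\<dots> = (\<Sum>j\<in>{a,b}. h!j * v!j)"
      using a b other by (intro sum.mono_neutral_right) auto
    also have "\<dots> = h!a + h!b" using a b ab(2) by simp
    finally have "h!a + h!b = 0" using h0 h by simp
    then show ?thesis using bit_neq_iff by blast
  qed
  have "List.transpose Hr ! a = map (\<lambda>xs. xs ! a) Hr"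
    using a H_len H_rows by (simp add: nth_transpose filter_True)
  moreover have "List.transpose Hr ! b = map (\<lambda>xs. xs ! b) Hr"
    using b H_len H_rows by (simp add: nth_transpose filter_True)
  ultimately have "List.transpose Hr ! a = List.transpose Hr ! b"
    using eq by simp
  then have "a = b" using H_distinct H_len a b by (simp add: nth_eq_iff_index_eq)
  then show False using ab(2) by simp
qed

section \<open>Partial distances\<close>

lemma fin_len: "finite {x::bit list. length x = k}"
proof -
  have "{x::bit list. length x = k} = {x. set x \<subseteq> {0,1} \<and> length x = k}"
    using bit_cases2 by auto
  then show ?thesis using finite_lists_length_eq[of "{0::bit,1}" k] by simp
qed

lemma set_drop_mono: "j \<le> i \<Longrightarrow> set (drop i L) \<subseteq> set (drop j L)"
proof -
  assume "j \<le> i"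
  then have "drop i L = drop (i - j) (drop j L)" by simp
  then show ?thesis by (metis set_drop_subset)
qed

lemma E:
  assumes i: "i < 24" and lw: "length w = i" and lu: "length u = 24 - i - 1"
    and lv: "length v = 24 - i - 1"
  shows "hamming (lin_kernel Am (w @ [0] @ u)) (lin_kernel Am (w @ [1] @ v))
       = wt (comb 24 (drop i Lr) (1 # vadd u v))"
proof -
  have l1: "length (w @ [0] @ u) = 24" using i lw lu by simp
  have l2: "length (w @ [1] @ v) = 24" using i lw lv by simp
  have e0: "hamming (lin_kernel Am (w @ [0] @ u)) (lin_kernel Am (w @ [1] @ v))
     = wt (vadd (comb 24 Lr (w @ [0] @ u)) (comb 24 Lr (w @ [1] @ v)))"
    using l1 l2 rows_Lr by (simp only: lk hamming_wt length_comb)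
  have e1: "vadd (comb 24 Lr (w @ [0] @ u)) (comb 24 Lr (w @ [1] @ v))
     = comb 24 Lr (vadd (w @ [0] @ u) (w @ [1] @ v))"
    using l1 l2 rows_Lr len_Lr by (simp only: comb_vadd)
  have e2: "vadd (w @ [0] @ u) (w @ [1] @ v) = replicate i 0 @ (1 # vadd u v)"
    using lw lu lv vadd_append_same[of "[0] @ u" "[1] @ v" w] by simp
  show ?thesis using e0 e1 e2 by (simp add: comb_replicate_prefix)
qed

lemma Gk:
  assumes c: "chk (\<lambda>v. k \<le> length (filter (\<lambda>b. b = 1) v)) (drop m Lr) (replicate 24 0) False"
    and mi: "m \<le> i" and i: "i < 24" and x: "length x = 23 - i"
  shows "k \<le> wt (comb 24 (drop i Lr) (1 # x))"
proof -
  define c where "c = replicate (i - m) 0 @ 1 # x"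
  have lc: "length c = length (drop m Lr)" using mi i x len_Lr by (simp add: c_def)
  have "k \<le> length (filter (\<lambda>b. b = 1) (vadd (replicate 24 0) (comb 24 (drop m Lr) c)))"
    using chk_sound[OF c _ _ lc] rows_drop by (simp add: c_def)
  moreover have "comb 24 (drop m Lr) c = comb 24 (drop i Lr) (1 # x)"
    using mi by (simp add: c_def comb_replicate_prefix)
  moreover have "vadd (replicate 24 0) (comb 24 (drop i Lr) (1 # x)) = comb 24 (drop i Lr) (1 # x)"
    using rows_drop by (simp add: vadd_zero_left)
  ultimately show ?thesis by (simp add: wt_filter)
qed

lemma F_lb:
  assumes i: "i < 24" and x: "length x = 23 - i"
  shows "Dl!i \<le> wt (comb 24 (drop i Lr) (1 # x))"
proof -
  define v where "v = comb 24 (drop i Lr) (1 # x)"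
  define u where "u = replicate i 0 @ 1 # x"
  have lu: "length u = 24" using i x by (simp add: u_def)
  have vu: "v = comb 24 Lr u" by (simp add: u_def v_def comb_replicate_prefix)
  have unz: "u \<noteq> replicate 24 0"
  proof
    assume "u = replicate 24 0"
    then have "u ! i = 0" using i by simp
    moreover have "u ! i = 1" by (simp add: u_def nth_append)
    ultimately show False by simp
  qed
  have vnz: "v \<noteq> replicate 24 0" using comb_nonzero lu unz vu by simp
  have lv: "length v = 24" using rows_drop by (simp add: v_def)
  have wnz: "wt v \<noteq> 0" using wt_zero[of v] lv vnz by auto
  have par: "even (wt v)" if "1 \<le> i"
  proof -
    have "\<forall>r\<in>set (drop i Lr). dot (replicate 24 1) r = 0"
      using par_rows set_drop_mono[OF that] by (meson subsetD)
    then have "dot (replicate 24 1) v = 0" using rows_drop by (simp add: v_def dot_comb)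
    moreover have "dot (replicate 24 1) v = of_nat (wt v)" using dot_ones[of v] lv by (simp add: wt_filter)
    ultimately show ?thesis by (simp add: of_nat_bit split: if_splits)
  qed
  have syn: "wt v \<noteq> 2" if "6 \<le> i"
  proof -
    have "\<forall>h\<in>set Hr. dot h v = 0"
    proof
      fix h assume h: "h \<in> set Hr"
      have "\<forall>r\<in>set (drop i Lr). dot h r = 0"
        using syn_rows set_drop_mono[OF that] h by (meson subsetD)
      then show "dot h v = 0" using rows_drop by (simp add: v_def dot_comb)
    qed
    then show ?thesis using W2 lv by blast
  qed
  show ?thesis
  proof (cases "i = 0")
    case True
    then show ?thesis using Dl_val[OF i] wnz by (simp add: v_def)
  next
    case False
    note nz = False
    show ?thesis
    proof (cases "i < 6")
      case True
      then have "Dl!i = 2" using Dl_val[OF i] nz by simp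
      moreover have "even (wt v)" using par nz by simp
      moreover have "2 \<le> wt v" using \<open>even (wt v)\<close> wnz by presburger
      ultimately show ?thesis by (simp add: v_def)
    next
      case False
      note n6 = False
      show ?thesis
      proof (cases "i < 12")
        case True
        then have "Dl!i = 4" using Dl_val[OF i] nz n6 by simp
        moreover have "even (wt v)" using par nz by simp
        moreover have "wt v \<noteq> 2" using syn n6 by simp
        moreover have "4 \<le> wt v" using \<open>even (wt v)\<close> \<open>wt v \<noteq> 2\<close> wnz by presburger
        ultimately show ?thesis by (simp add: v_def)
      next
        case False
        note n12 = False
        show ?thesis
        proof (cases "i < 19")
          case True
          then have "Dl!i = 8" using Dl_val[OF i] nz n6 n12 by simp
          then show ?thesis using Gk[OF g8 _ i x] n12 by simp
        next
          case False
          note n19 = False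
          show ?thesis
          proof (cases "i < 22")
            case True
            then have "Dl!i = 12" using Dl_val[OF i] nz n6 n12 n19 by simp
            then show ?thesis using Gk[OF g12 _ i x] n19 by simp
          next
            case False
            then have "Dl!i = 16" using Dl_val[OF i] nz n6 n12 n19 by simp
            then show ?thesis using Gk[OF g16 _ i x] False by simp
          qed
        qed
      qed
    qed
  qed
qed

lemma pd:
  assumes i: "i < 24"
  shows "partial_distance 24 (lin_kernel Am) i = Dl ! i"
proof -
  let ?F = "\<lambda>x. wt (comb 24 (drop i Lr) (1 # x))"
  have S: "{hamming (lin_kernel Am (w @ [0] @ u)) (lin_kernel Am (w @ [1] @ v)) | w u v.
      length w = i \<and> length u = 24 - i - 1 \<and> length v = 24 - i - 1}
     = ?F ` {x. length x = 23 - i}" (is "?L = ?R")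
  proof
    show "?L \<subseteq> ?R"
    proof
      fix y assume "y \<in> ?L"
      then obtain w u v where y: "y = hamming (lin_kernel Am (w @ [0] @ u)) (lin_kernel Am (w @ [1] @ v))"
        and l: "length w = i" "length u = 24 - i - 1" "length v = 24 - i - 1" by blast
      have "y = ?F (vadd u v)" using E[OF i l] y by simp
      moreover have "length (vadd u v) = 23 - i" using l by simp
      ultimately show "y \<in> ?R" by blast
    qed
    show "?R \<subseteq> ?L"
    proof
      fix y assume "y \<in> ?R"
      then obtain x where y: "y = ?F x" and lx: "length x = 23 - i" by blast
      have z: "vadd (replicate (23 - i) 0) x = x" using lx by (simp add: vadd_zero_left)
      have "y = hamming (lin_kernel Am (replicate i 0 @ [0] @ replicate (23 - i) 0))
                        (lin_kernel Am (replicate i 0 @ [1] @ x))"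
        using E[of i "replicate i 0" "replicate (23 - i) 0" x] i lx y z by simp
      moreover have "length (replicate (23 - i) 0 :: bit list) = 24 - i - 1" by simp
      moreover have "length x = 24 - i - 1" using lx by simp
      moreover have "length (replicate i 0 :: bit list) = i" by simp
      ultimately show "y \<in> ?L" by blast
    qed
  qed
  have fin: "finite (?F ` {x. length x = 23 - i})" using fin_len by simp
  have mem: "Dl!i \<in> ?F ` {x. length x = 23 - i}"
  proof -
    have il: "i < length Lr" using i len_Lr by simp
    have lri: "length (Lr ! i) = 24" using rows_Lr il nth_mem by blast
    have "comb 24 (drop i Lr) (1 # replicate (23 - i) 0)
        = vadd (Lr ! i) (comb 24 (drop (Suc i) Lr) (replicate (23 - i) 0))"
      using Cons_nth_drop_Suc[OF il] by (metis comb.simps(1) one_neq_zero)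
    also have "\<dots> = Lr ! i" using lri by (simp add: comb_zero vadd_zero_right)
    finally have "?F (replicate (23 - i) 0) = wt (Lr ! i)" by simp
    also have "\<dots> = Dl ! i" using wts il by (metis nth_map wt_filter)
    finally show ?thesis by (metis (mono_tags, lifting) length_replicate mem_Collect_eq rev_image_eqI)
  qed
  have lb: "\<And>y. y \<in> ?F ` {x. length x = 23 - i} \<Longrightarrow> Dl!i \<le> y" using F_lb i by auto
  show ?thesis unfolding partial_distance_def S
    by (rule Min_eqI[OF fin lb mem])
qed

section \<open>Invertibility and kernel property\<close>

lemma AB: "Am * Bm = 1\<^sub>m 24"
proof (rule eq_matI)
  fix i j assume "i < dim_row (1\<^sub>m 24 :: bit mat)" and "j < dim_col (1\<^sub>m 24 :: bit mat)"
  then have i: "i < 24" and j: "j < 24" by auto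
  have lri: "length (Lr ! i) = 24" using rows_Lr i len_Lr nth_mem by (metis)
  have "(Am * Bm) $$ (i, j) = (\<Sum>k\<in>{0..<24}. Lr!i!k * Mr!k!j)"
    using i j by (simp add: Am_def Bm_def scalar_prod_def)
  also have "\<dots> = (\<Sum>k<length (Lr!i). (Lr!i)!k * Mr!k!j)"
    using lri by (simp add: atLeast0LessThan)
  also have "\<dots> = comb 24 Mr (Lr!i) ! j"
    using nth_comb[of Mr 24 "Lr!i" j] rows_Mr len_Mr lri j by simp
  also have "\<dots> = idrows 24 ! i ! j" using inv_lm i len_Lr by (metis nth_map)
  also have "\<dots> = (1\<^sub>m 24 :: bit mat) $$ (i, j)" using i j by (simp add: nth_idrows)
  finally show "(Am * Bm) $$ (i, j) = (1\<^sub>m 24 :: bit mat) $$ (i, j)" .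
qed (auto simp: Am_def Bm_def)

lemma BA: "Bm * Am = 1\<^sub>m 24"
proof (rule eq_matI)
  fix i j assume "i < dim_row (1\<^sub>m 24 :: bit mat)" and "j < dim_col (1\<^sub>m 24 :: bit mat)"
  then have i: "i < 24" and j: "j < 24" by auto
  have lri: "length (Mr ! i) = 24" using rows_Mr i len_Mr nth_mem by (metis)
  have "(Bm * Am) $$ (i, j) = (\<Sum>k\<in>{0..<24}. Mr!i!k * Lr!k!j)"
    using i j by (simp add: Am_def Bm_def scalar_prod_def)
  also have "\<dots> = (\<Sum>k<length (Mr!i). (Mr!i)!k * Lr!k!j)"
    using lri by (simp add: atLeast0LessThan)
  also have "\<dots> = comb 24 Lr (Mr!i) ! j"
    using nth_comb[of Lr 24 "Mr!i" j] rows_Lr len_Lr lri j by simp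
  also have "\<dots> = idrows 24 ! i ! j" using inv_ml i len_Mr by (metis nth_map)
  also have "\<dots> = (1\<^sub>m 24 :: bit mat) $$ (i, j)" using i j by (simp add: nth_idrows)
  finally show "(Bm * Am) $$ (i, j) = (1\<^sub>m 24 :: bit mat) $$ (i, j)" .
qed (auto simp: Am_def Bm_def)

lemma inv_Am: "invertible_mat Am"
proof -
  have "inverts_mat Am Bm" using AB by (simp add: inverts_mat_def Am_def)
  moreover have "inverts_mat Bm Am" using BA by (simp add: inverts_mat_def Bm_def)
  moreover have "square_mat Am" by (simp add: Am_def)
  ultimately show ?thesis unfolding invertible_mat_def by blast
qed

lemma kern: "is_kernel 24 (lin_kernel Am)"
proof -
  have inj: "inj_on (lin_kernel Am) (words 24)"
  proof (rule inj_onI)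
    fix x y assume x: "x \<in> words 24" and y: "y \<in> words 24"
      and e: "lin_kernel Am x = lin_kernel Am y"
    have lx: "length x = 24" and ly: "length y = 24" using x y by (auto simp: words_def)
    have "comb 24 Lr x = comb 24 Lr y" using e lk[OF lx] lk[OF ly] by simp
    then show "x = y" using comb_inv[OF lx] comb_inv[OF ly] by metis
  qed
  have img: "lin_kernel Am ` words 24 = words 24"
  proof
    show "lin_kernel Am ` words 24 \<subseteq> words 24"
      by (auto simp: words_def lin_kernel_def Am_def)
    show "words 24 \<subseteq> lin_kernel Am ` words 24"
    proof
      fix y assume y: "y \<in> words 24"
      then have ly: "length y = 24" by (simp add: words_def)
      have lc: "length (comb 24 Mr y) = 24" using rows_Mr by simp
      have "lin_kernel Am (comb 24 Mr y) = y" using lk[OF lc] comb_inv2[OF ly] by simp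
      moreover have "comb 24 Mr y \<in> words 24" using lc by (simp add: words_def)
      ultimately show "y \<in> lin_kernel Am ` words 24" by (metis imageI)
    qed
  qed
  show ?thesis unfolding is_kernel_def bij_betw_def using inj img by blast
qed

section \<open>Finiteness of the exponent set\<close>

lemma pd_cong:
  assumes il: "i < l" and eq: "\<forall>x\<in>words l. g x = g' x"
  shows "partial_distance l g i = partial_distance l g' i"
proof -
  have gg: "g (w @ [b] @ u) = g' (w @ [b] @ u)" if "length w = i" "length u = l - i - 1" for w u b
    using eq that il by (simp add: words_def)
  have "{hamming (g (w @ [0] @ u)) (g (w @ [1] @ v)) | w u v.
      length w = i \<and> length u = l - i - 1 \<and> length v = l - i - 1}
    = {hamming (g' (w @ [0] @ u)) (g' (w @ [1] @ v)) | w u v.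
      length w = i \<and> length u = l - i - 1 \<and> length v = l - i - 1}" (is "?A = ?B")
  proof
    show "?A \<subseteq> ?B"
    proof
      fix y assume "y \<in> ?A"
      then obtain w u v where y: "y = hamming (g (w @ [0] @ u)) (g (w @ [1] @ v))"
        and l: "length w = i" "length u = l - i - 1" "length v = l - i - 1" by blast
      have "y = hamming (g' (w @ [0] @ u)) (g' (w @ [1] @ v))"
        using y gg[OF l(1) l(2), of 0] gg[OF l(1) l(3), of 1] by simp
      then show "y \<in> ?B" using l by blast
    qed
    show "?B \<subseteq> ?A"
    proof
      fix y assume "y \<in> ?B"
      then obtain w u v where y: "y = hamming (g' (w @ [0] @ u)) (g' (w @ [1] @ v))"
        and l: "length w = i" "length u = l - i - 1" "length v = l - i - 1" by blast
      have "y = hamming (g (w @ [0] @ u)) (g (w @ [1] @ v))"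
        using y gg[OF l(1) l(2), of 0] gg[OF l(1) l(3), of 1] by simp
      then show "y \<in> ?A" using l by blast
    qed
  qed
  then show ?thesis unfolding partial_distance_def by simp
qed

lemma ke_cong:
  assumes eq: "\<forall>x\<in>words l. g x = g' x"
  shows "kernel_exponent l g = kernel_exponent l g'"
proof -
  have "(\<Sum>i<l. log (real l) (real (partial_distance l g i)))
      = (\<Sum>i<l. log (real l) (real (partial_distance l g' i)))"
    by (rule sum.cong) (auto simp: pd_cong[OF _ eq])
  then show ?thesis unfolding kernel_exponent_def by simp
qed

lemma fin_ke: "finite (kernel_exponent 24 ` {g. is_kernel 24 g})"
proof -
  have "kernel_exponent 24 ` {g. is_kernel 24 g}
      \<subseteq> kernel_exponent 24 ` (PiE (words 24) (\<lambda>_. words 24))"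
  proof
    fix y assume "y \<in> kernel_exponent 24 ` {g. is_kernel 24 g}"
    then obtain g where g: "is_kernel 24 g" "y = kernel_exponent 24 g" by blast
    have "restrict g (words 24) \<in> PiE (words 24) (\<lambda>_. words 24)"
      using g(1) unfolding is_kernel_def bij_betw_def by auto
    moreover have "kernel_exponent 24 g = kernel_exponent 24 (restrict g (words 24))"
      by (rule ke_cong) simp
    ultimately show "y \<in> kernel_exponent 24 ` (PiE (words 24) (\<lambda>_. words 24))"
      using g(2) by blast
  qed
  moreover have "finite (PiE (words 24) (\<lambda>_. words 24))"
    using fin_len by (intro finite_PiE) (simp_all add: words_def)
  ultimately show ?thesis by (meson finite_imageI finite_subset)
qed

theorem mainTheorem12:
  fixes D :: "nat list"
  defines "D \<equiv> [1,2,2,2,2,2,4,4,4,4,4,4,8,8,8,8,8,8,8,12,12,12,16,16]"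
  shows "(\<exists>A :: bit mat. A \<in> carrier_mat 24 24 \<and> invertible_mat A \<and>
            (\<forall>i<24. partial_distance 24 (lin_kernel A) i = D ! i))
         \<and> max_exponent 24 \<ge> (1 / 24) * (\<Sum>i<24. log 24 (real (D ! i)))"
proof -
  have DD: "D = Dl" by (simp add: D_def Dl_def)
  have pdall: "\<forall>i<24. partial_distance 24 (lin_kernel Am) i = D ! i" using pd DD by simp
  have carr: "Am \<in> carrier_mat 24 24" by (simp add: Am_def)
  have c1: "\<exists>A :: bit mat. A \<in> carrier_mat 24 24 \<and> invertible_mat A \<and>
            (\<forall>i<24. partial_distance 24 (lin_kernel A) i = D ! i)"
    using carr inv_Am pdall by blast
  have "(\<Sum>i<24. log (real 24) (real (partial_distance 24 (lin_kernel Am) i)))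
      = (\<Sum>i<24. log 24 (real (D ! i)))"
    by (rule sum.cong) (simp_all add: pdall)
  then have ke: "kernel_exponent 24 (lin_kernel Am) = (1 / 24) * (\<Sum>i<24. log 24 (real (D ! i)))"
    unfolding kernel_exponent_def by simp
  have "kernel_exponent 24 (lin_kernel Am) \<le> max_exponent 24"
    unfolding max_exponent_def using fin_ke kern by (intro Max_ge) auto
  then show ?thesis using c1 ke by simp
qed

end
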